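(* Let $G$ be a distribution on $\mathbb{R}$ with Lebesgue density $g$, and let $\theta^g=T^*_{(\alpha,\lambda)}(G)$ be the best fitting parameter. Then the influence function of the minimum $S^*$-divergence functional $T^*_{(\alpha,\lambda)}$ at $G$ is $$IF(y;G,T^*_{(\alpha,\lambda)})=[J_g^*]^{-1}N_g^*(y),$$ where $$N_g^*(y)=A\left[\int (f^*_{\theta^g}(x))^B (g^*(x))^{A-1}\tilde u_{\theta^g}(x)W(x,y,h)\,dx-\int (f^*_{\theta^g})^B (g^* )^A\tilde u_{\theta^g}\right],$$ $$J_g^*=A\int (f^*_{\theta^g})^{1+\alpha}\tilde u_{\theta^g}\tilde u_{\theta^g}^T+\int\big(\tilde i_{\theta^g}-B\,\tilde u_{\theta^g}\tilde u_{\theta^g}^T\big)\big[(g^* )^A-(f^*_{\theta^g})^A\big](f^*_{\theta^g})^B .$$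
   Context: Let $\{F_\theta:\theta\in\Theta\subseteq\mathbb{R}^p\}$ be a parametric family of distributions on $\mathbb{R}$ with Lebesgue densities $f_\theta$. Fix $\alpha\ge 0$, $\lambda\in\mathbb{R}$ and put $A=1+\lambda(1-\alpha)$, $B=\alpha-\lambda(1-\alpha)$ (so $A+B=1+\alpha$). For densities $g,f$ the $S$-divergence is $S_{(\alpha,\lambda)}(g,f)=\frac1A\int f^{1+\alpha}-\frac{1+\alpha}{AB}\int f^Bg^A+\frac1B\int g^{1+\alpha}$ (defined by continuous limits when $A=0$ or $B=0$). Let $W(x,y,h)\ge0$ be a kernel with fixed bandwidth $h>0$ which, for each $y$, is a probability density in $x$. Define the smoothed densities $f^*_\theta(x)=\int W(x,y,h)f_\theta(y)\,dy$ and $g^*(x)=\int W(x,y,h)\,dG(y)$, the smoothed score $\tilde u_\theta(x)=\nabla_\theta\log f^*_\theta(x)$ and $\tilde i_\theta(x)=-\nabla_\theta\tilde u_\theta(x)$. The minimum $S^*$-divergence functional $T^*_{(\alpha,\lambda)}(G)$ is defined by $S_{(\alpha,\lambda)}(g^*,f^*_{T^*_{(\alpha,\lambda)}(G)})=\min_{\theta\in\Theta}S_{(\alpha,\lambda)}(g^*,f^*_\theta)$ and satisfies the estimating equation $\int K(\delta(x))(f^*_\theta(x))^{1+\alpha}\tilde u_\theta(x)\,dx=0$ with $\delta=g^*/f^*_\theta-1$ and $K(\delta)=((\delta+1)^A-1)/A$ ($K(\delta)=\log(1+\delta)$ if $A=0$). The influence function of a functional $T$ at $G$ is $IF(y;G,T)=\frac{\partial}{\partial\epsilon}T(G_\epsilon)\big|_{\epsilon=0}$,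 where $G_\epsilon=(1-\epsilon)G+\epsilon\wedge_y$ and $\wedge_y$ is the point mass at $y$. *)

theory Defs
  imports "HOL-Probability.Probability"
begin

definition contam :: "real measure \<Rightarrow> real \<Rightarrow> real \<Rightarrow> real measure" where
  "contam G y \<epsilon> = measure_of UNIV (sets borel)
      (\<lambda>S. ennreal (1 - \<epsilon>) * emeasure G S + ennreal \<epsilon> * indicator S y)"

definition fstar :: "(real \<Rightarrow> real \<Rightarrow> real \<Rightarrow> real) \<Rightarrow> real \<Rightarrow> ('p \<Rightarrow> real \<Rightarrow> real)
                     \<Rightarrow> 'p \<Rightarrow> real \<Rightarrow> real" where
  "fstar W h f \<theta> x = (LINT y|lborel. W x y h * f \<theta> y)"

definition gstar :: "(real \<Rightarrow> real \<Rightarrow> real \<Rightarrow> real) \<Rightarrow> real \<Rightarrow> real measure \<Rightarrow> real \<Rightarrow> real" where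
  "gstar W h G x = (LINT y|G. W x y h)"

definition Kfun :: "real \<Rightarrow> real \<Rightarrow> real" where
  "Kfun A \<delta> = (if A = 0 then ln (1 + \<delta>) else ((\<delta> + 1) powr A - 1) / A)"

definition sinfo :: "(real^'p \<Rightarrow> real \<Rightarrow> real^'p) \<Rightarrow> real^'p \<Rightarrow> real \<Rightarrow> real^'p^'p" where
  "sinfo u \<theta> x = - jacobian (\<lambda>t. u t x) (at \<theta>)"

definition outer :: "real^'p \<Rightarrow> real^'p \<Rightarrow> real^'p^'p" where
  "outer a b = (\<chi> i j. a $ i * b $ j)"

definition est_integrand ::
  "real \<Rightarrow> real \<Rightarrow> (real \<Rightarrow> real \<Rightarrow> real \<Rightarrow> real) \<Rightarrow> real \<Rightarrow> (real^'p \<Rightarrow> real \<Rightarrow> real)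
   \<Rightarrow> (real^'p \<Rightarrow> real \<Rightarrow> real^'p) \<Rightarrow> real measure \<Rightarrow> real^'p \<Rightarrow> real \<Rightarrow> real^'p" where
  "est_integrand \<alpha> lam W h f u M \<theta> x =
     (Kfun (1 + lam * (1 - \<alpha>)) (gstar W h M x / fstar W h f \<theta> x - 1)
        * fstar W h f \<theta> x powr (1 + \<alpha>)) *\<^sub>R u \<theta> x"

definition est_fun ::
  "real \<Rightarrow> real \<Rightarrow> (real \<Rightarrow> real \<Rightarrow> real \<Rightarrow> real) \<Rightarrow> real \<Rightarrow> (real^'p \<Rightarrow> real \<Rightarrow> real)
   \<Rightarrow> (real^'p \<Rightarrow> real \<Rightarrow> real^'p) \<Rightarrow> real measure \<Rightarrow> real^'p \<Rightarrow> real^'p" where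
  "est_fun \<alpha> lam W h f u M \<theta> = (LINT x|lborel. est_integrand \<alpha> lam W h f u M \<theta> x)"

text \<open>Influence function IF(y;G,T) = d/d eps T(G_eps) at eps = 0
  (G_eps is a distribution only for eps in [0,1], so this is the right derivative).\<close>
definition influence_function :: "(real measure \<Rightarrow> 'b::real_normed_vector) \<Rightarrow> real measure \<Rightarrow> real \<Rightarrow> 'b" where
  "influence_function T G y = vector_derivative (\<lambda>\<epsilon>. T (contam G y \<epsilon>)) (at 0 within {0..1})"

end

theory Submission
  imports Defs
begin


lemma contam_sets[simp]: "sets (contam G y e) = sets borel"
  unfolding contam_def using sets.sigma_sets_eq[of borel] by simp

lemma contam_space[simp]: "space (contam G y e) = UNIV"
  unfolding contam_def by (simp add: space_measure_of_conv)

lemma contam_emeasure: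
  assumes G: "sets G = sets borel" and S: "S \<in> sets borel"
  shows "emeasure (contam G y e) S = ennreal (1 - e) * emeasure G S + ennreal e * indicator S y"
  unfolding contam_def
proof (rule emeasure_measure_of_sigma)
  show "sigma_algebra UNIV (sets borel)"
    using sets.sigma_algebra_axioms[of borel] by simp
  show "positive (sets borel) (\<lambda>S. ennreal (1 - e) * emeasure G S + ennreal e * indicator S y)"
    by (simp add: positive_def)
  show "countably_additive (sets borel) (\<lambda>S. ennreal (1 - e) * emeasure G S + ennreal e * indicator S y)"
    unfolding countably_additive_def
  proof (intro allI impI)
    fix A :: "nat \<Rightarrow> real set"
    assume A: "range A \<subseteq> sets borel" "disjoint_family A" "\<Union> (range A) \<in> sets borel"
    have "(\<Sum>i. ennreal (1 - e) * emeasure G (A i) + ennreal e * indicator (A i) y)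
        = (\<Sum>i. ennreal (1 - e) * emeasure G (A i)) + (\<Sum>i. ennreal e * indicator (A i) y)"
      by (subst suminf_add) auto
    also have "\<dots> = ennreal (1 - e) * (\<Sum>i. emeasure G (A i)) + ennreal e * (\<Sum>i. indicator (A i) y)"
      by (simp add: ennreal_suminf_cmult)
    also have "\<dots> = ennreal (1 - e) * emeasure G (\<Union> (range A)) + ennreal e * indicator (\<Union> (range A)) y"
      using A G by (simp add: suminf_emeasure suminf_indicator)
    finally show "(\<Sum>i. ennreal (1 - e) * emeasure G (A i) + ennreal e * indicator (A i) y) =
         ennreal (1 - e) * emeasure G (\<Union> (range A)) + ennreal e * indicator (\<Union> (range A)) y" .
  qed
qed (fact S)

lemma contam_nn_integral:
  assumes G: "sets G = sets borel" and f: "f \<in> borel_measurable borel"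
  shows "(\<integral>\<^sup>+x. f x \<partial>contam G y e) = ennreal (1 - e) * (\<integral>\<^sup>+x. f x \<partial>G) + ennreal e * f y"
  using f
proof (induction rule: borel_measurable_induct)
  case (cong f g)
  have "(\<integral>\<^sup>+x. f x \<partial>contam G y e) = (\<integral>\<^sup>+x. g x \<partial>contam G y e)"
    by (rule nn_integral_cong) (use cong in simp)
  moreover have "(\<integral>\<^sup>+x. f x \<partial>G) = (\<integral>\<^sup>+x. g x \<partial>G)"
    by (rule nn_integral_cong) (use cong G sets_eq_imp_space_eq[OF G] in simp)
  ultimately show ?case using cong by simp
next
  case (set A)
  have "A \<in> sets (contam G y e)" "A \<in> sets G" using set G by auto
  then show ?case using contam_emeasure[OF G set] by (simp del: contam_sets)
next
  case (mult u c)
  have mu: "u \<in> borel_measurable (contam G y e)" "u \<in> borel_measurable G"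
    using mult G by (auto simp: measurable_def)
  show ?case using mult mu
    by (simp add: nn_integral_cmult algebra_simps mult.left_commute)
next
  case (add u v)
  have mu: "u \<in> borel_measurable (contam G y e)" "u \<in> borel_measurable G"
     "v \<in> borel_measurable (contam G y e)" "v \<in> borel_measurable G"
    using add G by (auto simp: measurable_def)
  show ?case using add mu
    by (simp add: nn_integral_add algebra_simps distrib_left)
next
  case (seq U)
  have mu: "\<And>i. U i \<in> borel_measurable (contam G y e)" "\<And>i. U i \<in> borel_measurable G"
    using seq G by (auto simp: measurable_def)
  have "(\<integral>\<^sup>+x. (SUP i. U i) x \<partial>contam G y e) = (\<integral>\<^sup>+x. (SUP i. U i x) \<partial>contam G y e)"
    by (simp add: image_comp)
  also have "\<dots> = (SUP i. (\<integral>\<^sup>+x. U i x \<partial>contam G y e))"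
    using seq mu by (intro nn_integral_monotone_convergence_SUP) auto
  also have "\<dots> = (SUP i. ennreal (1 - e) * (\<integral>\<^sup>+x. U i x \<partial>G) + ennreal e * U i y)"
    using seq by simp
  also have "\<dots> = (SUP i. ennreal (1 - e) * (\<integral>\<^sup>+x. U i x \<partial>G)) + (SUP i. ennreal e * U i y)"
  proof (rule ennreal_SUP_add)
    show "incseq (\<lambda>i. ennreal (1 - e) * (\<integral>\<^sup>+x. U i x \<partial>G))"
      using seq unfolding incseq_def le_fun_def by (auto intro!: mult_left_mono nn_integral_mono)
    show "incseq (\<lambda>i. ennreal e * U i y)"
      using seq unfolding incseq_def le_fun_def by (auto intro!: mult_left_mono)
  qed
  also have "\<dots> = ennreal (1 - e) * (SUP i. (\<integral>\<^sup>+x. U i x \<partial>G)) + ennreal e * (SUP i. U i y)"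
    by (simp add: SUP_mult_left_ennreal)
  also have "(SUP i. (\<integral>\<^sup>+x. U i x \<partial>G)) = (\<integral>\<^sup>+x. (SUP i. U i x) \<partial>G)"
    using seq mu by (intro nn_integral_monotone_convergence_SUP[symmetric]) auto
  also have "\<dots> = (\<integral>\<^sup>+x. (SUP i. U i) x \<partial>G)"
    by (simp add: image_comp)
  finally show ?case by (simp add: image_comp)
qed

lemma contam_integral:
  fixes k :: "real \<Rightarrow> real"
  assumes G: "sets G = sets borel" and k: "k \<in> borel_measurable borel" "\<And>z. 0 \<le> k z"
    and pos: "0 < (LINT z|G. k z)" and e: "0 \<le> e" "e \<le> 1"
  shows "(LINT z|contam G y e. k z) = (1 - e) * (LINT z|G. k z) + e * k y"
proof -
  have kG: "k \<in> borel_measurable G" using k G by (simp add: measurable_def)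
  have "integrable G k" using pos not_integrable_integral_eq by fastforce
  then have "(\<integral>\<^sup>+z. ennreal (k z) \<partial>G) = ennreal (LINT z|G. k z)"
    using k by (intro nn_integral_eq_integral) auto
  moreover have "(\<integral>\<^sup>+z. ennreal (k z) \<partial>contam G y e)
     = ennreal (1 - e) * (\<integral>\<^sup>+z. ennreal (k z) \<partial>G) + ennreal e * ennreal (k y)"
    using contam_nn_integral[OF G, of "\<lambda>z. ennreal (k z)" y e] k by simp
  ultimately have "(\<integral>\<^sup>+z. ennreal (k z) \<partial>contam G y e) = ennreal ((1 - e) * (LINT z|G. k z) + e * k y)"
    using e pos k by (simp add: ennreal_mult ennreal_plus[symmetric])
  moreover have "k \<in> borel_measurable (contam G y e)" using k by (simp add: measurable_def)
  ultimately show ?thesis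
    using nn_integral_eq_integrable[of k "contam G y e" "(1 - e) * (LINT z|G. k z) + e * k y"] e pos k
    by simp
qed



lemma outer_mv: "outer a b *v w = (b \<bullet> w) *\<^sub>R (a :: real^'n)"
  by (simp add: outer_def vec_eq_iff matrix_vector_mult_def inner_vec_def sum_distrib_left sum_distrib_right mult_ac)

lemma not_invertible_zero: "\<not> invertible (0 :: real^'n^'n)"
proof
  assume "invertible (0 :: real^'n^'n)"
  then obtain B :: "real^'n^'n" where "0 ** B = mat 1" unfolding invertible_def by blast
  then have "(0 ** B) $ i $ i = (mat 1 :: real^'n^'n) $ i $ i" for i by simp
  then show False by (simp add: matrix_matrix_mult_def mat_def)
qed

lemma matrix_inv_left': "invertible (A :: real^'n^'n) \<Longrightarrow> matrix_inv A ** A = mat 1"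
  unfolding invertible_def matrix_inv_def by (rule someI_ex[THEN conjunct2])

lemma fderiv_from_ln:
  fixes F :: "'a::real_normed_vector \<Rightarrow> real"
  assumes d: "((\<lambda>t. ln (F t)) has_derivative D) (at t0)"
    and pos: "\<forall>t\<in>S. 0 < F t" and S: "open S" "t0 \<in> S"
  shows "(F has_derivative (\<lambda>h. F t0 * D h)) (at t0)"
proof -
  define L where "L = (\<lambda>t. ln (F t))"
  have dL: "(L has_derivative D) (at t0)" using d by (simp add: L_def)
  have "((\<lambda>t. exp (L t)) has_derivative (\<lambda>h. exp (L t0) * D h)) (at t0)"
    by (rule derivative_eq_intros dL refl | simp add: mult.commute)+
  then have "((\<lambda>t. exp (ln (F t))) has_derivative (\<lambda>h. exp (ln (F t0)) * D h)) (at t0)"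
    by (simp add: L_def)
  then have "((\<lambda>t. exp (ln (F t))) has_derivative (\<lambda>h. F t0 * D h)) (at t0)"
    using pos S by simp
  then show ?thesis
    by (rule has_derivative_transform_within_open[OF _ S(1) S(2)]) (use pos in simp)
qed

lemma vec_identity:
  fixes U V :: "real^'n"
  assumes A: "A \<noteq> 0" and Y: "Y > 0" and al: "1 + \<alpha> = A + B"
  shows "(s * (- (X / Y) * (Y * Z) + (X / Y - 1) / A * ((1 + \<alpha>) * (Y * Z)))) *\<^sub>R U
       + ((X / Y - 1) / A * (Y * Z)) *\<^sub>R (- V)
     = - (1 / A) *\<^sub>R ((A * (Y * Z)) *\<^sub>R (s *\<^sub>R U) + ((X - Y) * Z) *\<^sub>R (V - B *\<^sub>R (s *\<^sub>R U)))"
proof -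
  have c1: "s * (- (X / Y) * (Y * Z) + (X / Y - 1) / A * ((1 + \<alpha>) * (Y * Z)))
      = - (1/A) * (A * (Y * Z) * s - (X - Y) * Z * B * s)"
    using A Y al by (simp add: field_simps)
  have c2: "(X / Y - 1) / A * (Y * Z) = (1/A) * ((X - Y) * Z)"
    using A Y by (simp add: field_simps)
  show ?thesis unfolding c1 c2 by (simp add: algebra_simps)
qed

lemma theta_deriv:
  fixes F :: "real^'p \<Rightarrow> real" and U :: "real^'p \<Rightarrow> real^'p" and Sm :: "real^'p^'p"
  assumes dF: "(F has_derivative (\<lambda>w. F t0 * (w \<bullet> U t0))) (at t0)" and p: "F t0 > 0"
    and a: "a > 0" and A: "A \<noteq> 0" and al: "1 + \<alpha> = A + B"
    and dU: "(U has_derivative (\<lambda>w. - (Sm *v w))) (at t0)"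
  shows "((\<lambda>t. (((a / F t) powr A - 1) / A * F t powr (1 + \<alpha>)) *\<^sub>R U t) has_derivative
    (\<lambda>w. - (1 / A) *\<^sub>R ((A *\<^sub>R (F t0 powr (1 + \<alpha>) *\<^sub>R outer (U t0) (U t0))
        + ((a powr A - F t0 powr A) * F t0 powr B) *\<^sub>R (Sm - B *\<^sub>R outer (U t0) (U t0))) *v w))) (at t0)"
proof -
  define X where "X = a powr A"
  define Y where "Y = F t0 powr A"
  define Z where "Z = F t0 powr B"
  have Ypos: "Y > 0" using p by (simp add: Y_def)
  have q: "(a / F t0) powr A = X / Y" using a p by (simp add: X_def Y_def powr_divide)
  have r: "F t0 powr (1 + \<alpha>) = Y * Z" using p by (simp add: Y_def Z_def al powr_add)
  have dc: "((\<lambda>t. ((a / F t) powr A - 1) / A * F t powr (1 + \<alpha>)) has_derivative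
       (\<lambda>w. (w \<bullet> U t0) * (- (X / Y) * (Y * Z) + (X / Y - 1) / A * ((1 + \<alpha>) * (Y * Z))))) (at t0)"
  proof -
    have Fne: "F t0 \<noteq> 0" and aF: "0 < a / F t0" using a p by auto
    show ?thesis
    apply (rule has_derivative_eq_rhs)
     apply (rule derivative_eq_intros dF refl Fne aF A p UNIV_I)+
    apply (rule ext)
    apply (unfold q r)
    apply (use a p A Ypos in \<open>simp add: field_simps\<close>)
    done
  qed
  have c0: "((a / F t0) powr A - 1) / A * F t0 powr (1 + \<alpha>) = (X / Y - 1) / A * (Y * Z)"
    using q r by simp
  have e2: "(a powr A - F t0 powr A) * F t0 powr B = (X - Y) * Z" by (simp add: X_def Y_def Z_def)
  show ?thesis
    apply (rule has_derivative_eq_rhs[OF has_derivative_scaleR[OF dc dU]])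
    apply (rule ext)
    apply (simp only: matrix_vector_mult_add_rdistrib matrix_vector_mult_diff_rdistrib
        scaleR_matrix_vector_assoc[symmetric] outer_mv q r e2 c0 inner_commute[of "U t0"])
    subgoal for w
      using vec_identity[OF A Ypos al, of "w \<bullet> U t0" X Z "U t0" "Sm *v w"]
      by (simp add: algebra_simps)
    done
qed

lemma eps_deriv:
  fixes V :: "real^'p"
  assumes a: "a > 0" and p: "p > 0" and A: "A \<noteq> 0" and al: "1 + \<alpha> = A + B"
  shows "((\<lambda>e. (((((1 - e) * a + e * wy) / p) powr A - 1) / A * p powr (1 + \<alpha>)) *\<^sub>R V) has_derivative
     (\<lambda>t. t *\<^sub>R ((p powr B * a powr (A - 1) * wy) *\<^sub>R V - (p powr B * a powr A) *\<^sub>R V))) (at 0 within {0..1})"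
proof -
  define X where "X = a powr A"
  define Y where "Y = p powr A"
  define Z where "Z = p powr B"
  have Ypos: "Y > 0" using p by (simp add: Y_def)
  have Xpos: "X > 0" using a by (simp add: X_def)
  have q: "(a / p) powr A = X / Y" using a p by (simp add: X_def Y_def powr_divide)
  have r: "p powr (1 + \<alpha>) = Y * Z" using p by (simp add: Y_def Z_def al powr_add)
  have am: "a powr (A - 1) = X / a" using a by (simp add: X_def powr_diff)
  have pne: "p \<noteq> 0" and ap: "0 < a / p" using a p by auto
  have e0: "(1 - 0) * a + 0 * wy = a" by simp
  have z01: "(0::real) \<in> {0..1}" by simp
  have dc: "((\<lambda>e. ((((1 - e) * a + e * wy) / p) powr A - 1) / A * p powr (1 + \<alpha>)) has_derivative
       (\<lambda>t. t * (p powr B * a powr (A - 1) * wy - p powr B * a powr A))) (at 0 within {0..1})"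
    apply (rule has_derivative_eq_rhs)
     apply (rule derivative_eq_intros refl pne A p UNIV_I z01 | simp only: e0 ap)+
    apply (rule ext)
    apply (simp only: e0 q r am flip: X_def Z_def)
    apply (use a p A Ypos Xpos in \<open>simp add: field_simps\<close>)
    done
  show ?thesis
    apply (rule has_derivative_eq_rhs[OF has_derivative_scaleR[OF dc has_derivative_const]])
    apply (simp add: algebra_simps)
    done
qed

theorem theorem1:
  fixes \<alpha> lam h y :: real
    and W :: "real \<Rightarrow> real \<Rightarrow> real \<Rightarrow> real"
    and f :: "real^'p \<Rightarrow> real \<Rightarrow> real"
    and \<Theta> :: "(real^'p) set"
    and G :: "real measure" and g :: "real \<Rightarrow> real"
    and T :: "real measure \<Rightarrow> real^'p"
    and u :: "real^'p \<Rightarrow> real \<Rightarrow> real^'p"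
  defines "A \<equiv> 1 + lam * (1 - \<alpha>)"
      and "B \<equiv> \<alpha> - lam * (1 - \<alpha>)"
      and "\<theta>g \<equiv> T G"
  defines "fs \<equiv> fstar W h f \<theta>g"
      and "gs \<equiv> gstar W h G"
  defines "N \<equiv> A *\<^sub>R ((LINT x|lborel. (fs x powr B * gs x powr (A - 1) * W x y h) *\<^sub>R u \<theta>g x)
                      - (LINT x|lborel. (fs x powr B * gs x powr A) *\<^sub>R u \<theta>g x))"
      and "J \<equiv> A *\<^sub>R (LINT x|lborel. fs x powr (1 + \<alpha>) *\<^sub>R outer (u \<theta>g x) (u \<theta>g x))
              + (LINT x|lborel. ((gs x powr A - fs x powr A) * fs x powr B) *\<^sub>R
                                (sinfo u \<theta>g x - B *\<^sub>R outer (u \<theta>g x) (u \<theta>g x)))"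
  assumes alpha: "\<alpha> \<ge> 0"
      and bw: "h > 0"
      \<comment> \<open>parametric family of Lebesgue densities\<close>
      and fam: "\<forall>\<theta>\<in>\<Theta>. (\<forall>x. 0 \<le> f \<theta> x) \<and> has_bochner_integral lborel (f \<theta>) 1"
      and Theta_open: "open \<Theta>"
      \<comment> \<open>kernel: nonnegative, a probability density in x for every y\<close>
      and W_meas: "(\<lambda>(x, z). W x z h) \<in> borel_measurable borel"
      and W_nonneg: "\<forall>x z. 0 \<le> W x z h"
      and W_dens: "\<forall>z. has_bochner_integral lborel (\<lambda>x. W x z h) 1"
      \<comment> \<open>G is a distribution on the real line with Lebesgue density g\<close>
      and G_prob: "prob_space G"
      and G_sets: "sets G = sets borel"
      and g_meas: "g \<in> borel_measurable borel"
      and g_nonneg: "\<forall>x. 0 \<le> g x"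
      and G_dens: "G = density lborel g"
      \<comment> \<open>the best fitting parameter\<close>
      and thg_in: "\<theta>g \<in> \<Theta>"
      \<comment> \<open>positivity of the smoothed densities\<close>
      and fstar_pos: "\<forall>\<theta>\<in>\<Theta>. \<forall>x. 0 < fstar W h f \<theta> x"
      and gstar_pos: "\<forall>x. 0 < gs x"
      \<comment> \<open>u is the smoothed score, the gradient in theta of log f*_theta(x)\<close>
      and score: "\<forall>\<theta>\<in>\<Theta>. \<forall>x. GDERIV (\<lambda>t. ln (fstar W h f t x)) \<theta> :> u \<theta> x"
      and score_diff: "\<forall>\<theta>\<in>\<Theta>. \<forall>x. (\<lambda>t. u t x) differentiable (at \<theta>)"
      \<comment> \<open>T(G_eps) lies in Theta and solves the estimating equation\<close>
      and T_est: "\<forall>\<epsilon>\<in>{0..1}. T (contam G y \<epsilon>) \<in> \<Theta> \<and>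
                   est_fun \<alpha> lam W h f u (contam G y \<epsilon>) (T (contam G y \<epsilon>)) = 0"
      \<comment> \<open>the influence function exists\<close>
      and T_diff: "(\<lambda>\<epsilon>. T (contam G y \<epsilon>)) differentiable (at 0 within {0..1})"
      \<comment> \<open>differentiation under the integral sign in (eps, theta) at (0, theta^g) is permitted\<close>
      and interchange: "\<exists>Dk. (\<forall>x. ((\<lambda>(\<epsilon>, \<theta>). est_integrand \<alpha> lam W h f u (contam G y \<epsilon>) \<theta> x)
                                  has_derivative Dk x) (at (0, \<theta>g) within {0..1} \<times> \<Theta>))
                     \<and> ((\<lambda>(\<epsilon>, \<theta>). est_fun \<alpha> lam W h f u (contam G y \<epsilon>) \<theta>)
                          has_derivative (\<lambda>v. LINT x|lborel. Dk x v)) (at (0, \<theta>g) within {0..1} \<times> \<Theta>)"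
      \<comment> \<open>the integrals defining N*_g and J*_g exist\<close>
      and int1: "integrable lborel (\<lambda>x. (fs x powr B * gs x powr (A - 1) * W x y h) *\<^sub>R u \<theta>g x)"
      and int2: "integrable lborel (\<lambda>x. (fs x powr B * gs x powr A) *\<^sub>R u \<theta>g x)"
      and int3: "integrable lborel (\<lambda>x. fs x powr (1 + \<alpha>) *\<^sub>R outer (u \<theta>g x) (u \<theta>g x))"
      and int4: "integrable lborel (\<lambda>x. ((gs x powr A - fs x powr A) * fs x powr B) *\<^sub>R
                                (sinfo u \<theta>g x - B *\<^sub>R outer (u \<theta>g x) (u \<theta>g x)))"
      \<comment> \<open>J*_g is invertible\<close>
      and J_inv: "invertible J"
  shows "influence_function T G y = matrix_inv J *v N"
  proof -
  have fs_pos: "\<And>x. 0 < fs x" using fstar_pos thg_in by (simp add: fs_def)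
  have fs_ne: "\<And>x. fs x \<noteq> 0" using fs_pos by (metis less_irrefl)
  have gs_pos: "\<And>x. 0 < gs x" using gstar_pos by simp
  have gs_ne: "\<And>x. gs x \<noteq> 0" using gs_pos by (metis less_irrefl)
  have Bal: "1 + \<alpha> = A + B" by (simp add: A_def B_def)
  have Ane: "A \<noteq> 0"
  proof
    assume A0: "A = 0"
    have "J = 0" using fs_ne gs_ne by (simp add: J_def A0)
    then show False using J_inv not_invertible_zero by metis
  qed
  have KA: "\<And>d. Kfun (1 + lam * (1 - \<alpha>)) d = ((d + 1) powr A - 1) / A"
    using Ane by (simp add: Kfun_def A_def)
  have spG: "space G = UNIV" using sets_eq_imp_space_eq[OF G_sets] by simp
  have contam0: "contam G y 0 = G"
  proof -
    have "(\<lambda>S. ennreal (1 - 0) * emeasure G S + ennreal 0 * indicator S y) = emeasure G"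
      by (simp add: fun_eq_iff)
    then show ?thesis
      unfolding contam_def using measure_of_of_measure[of G] spG G_sets by simp
  qed
  have T0: "T (contam G y 0) = \<theta>g" by (simp add: contam0 \<theta>g_def)
  have Wm: "\<And>x. (\<lambda>z. W x z h) \<in> borel_measurable borel"
  proof -
    fix x :: real
    have "(\<lambda>z::real. (x, z)) \<in> borel_measurable borel"
      by (intro borel_measurable_continuous_onI continuous_intros)
    from measurable_compose[OF this W_meas] show "(\<lambda>z. W x z h) \<in> borel_measurable borel" by simp
  qed
  have gcont: "\<And>x e. e \<in> {0..1} \<Longrightarrow> gstar W h (contam G y e) x = (1 - e) * gs x + e * W x y h"
  proof -
    fix x e assume "e \<in> {0..1::real}"
    then show "gstar W h (contam G y e) x = (1 - e) * gs x + e * W x y h"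
      using contam_integral[OF G_sets Wm[of x], where y=y and e=e] W_nonneg gs_pos[of x]
      unfolding gstar_def gs_def by auto
  qed
  obtain Dk where
    Dk: "\<And>x. ((\<lambda>(\<epsilon>, \<theta>). est_integrand \<alpha> lam W h f u (contam G y \<epsilon>) \<theta> x)
                                  has_derivative Dk x) (at (0, \<theta>g) within {0..1} \<times> \<Theta>)"
    and DF: "((\<lambda>(\<epsilon>, \<theta>). est_fun \<alpha> lam W h f u (contam G y \<epsilon>) \<theta>)
                          has_derivative (\<lambda>v. LINT x|lborel. Dk x v)) (at (0, \<theta>g) within {0..1} \<times> \<Theta>)"
    using interchange by blast
  have cb: "cbox 0 1 = {0..1::real}" by (simp add: cbox_interval)
  have Deps: "\<And>x. Dk x (1, 0) = (fs x powr B * gs x powr (A - 1) * W x y h) *\<^sub>R u \<theta>g x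
                        - (fs x powr B * gs x powr A) *\<^sub>R u \<theta>g x"
  proof -
    fix x
    have p1: "((\<lambda>e. (e, \<theta>g)) has_derivative (\<lambda>t. (t, 0))) (at 0 within {0..1})"
      by (intro derivative_eq_intros) auto
    have sub: "(\<lambda>e. (e, \<theta>g)) ` {0..1} \<subseteq> {0..1} \<times> \<Theta>" using thg_in by auto
    have c1: "((\<lambda>e. est_integrand \<alpha> lam W h f u (contam G y e) \<theta>g x) has_derivative (\<lambda>t. Dk x (t, 0)))
        (at 0 within {0..1})"
      using has_derivative_in_compose[OF p1 has_derivative_subset[OF Dk[of x] sub]] by simp
    have c2: "((\<lambda>e. est_integrand \<alpha> lam W h f u (contam G y e) \<theta>g x) has_derivative
       (\<lambda>t. t *\<^sub>R ((fs x powr B * gs x powr (A - 1) * W x y h) *\<^sub>R u \<theta>g x - (fs x powr B * gs x powr A) *\<^sub>R u \<theta>g x)))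
        (at 0 within {0..1})"
    proof (rule has_derivative_transform_within[OF eps_deriv[OF gs_pos fs_pos Ane Bal] zero_less_one])
      show "(0::real) \<in> {0..1}" by simp
      fix e :: real assume "e \<in> {0..1}"
      then show "(((((1 - e) * gs x + e * W x y h) / fs x) powr A - 1) / A * fs x powr (1 + \<alpha>)) *\<^sub>R u \<theta>g x
          = est_integrand \<alpha> lam W h f u (contam G y e) \<theta>g x"
        by (simp add: est_integrand_def gcont KA fs_def)
    qed
    have "(\<lambda>t. Dk x (t, 0)) = (\<lambda>t. t *\<^sub>R ((fs x powr B * gs x powr (A - 1) * W x y h) *\<^sub>R u \<theta>g x - (fs x powr B * gs x powr A) *\<^sub>R u \<theta>g x))"
      by (rule frechet_derivative_unique_within_closed_interval[of 0 1 0]) (use c1 c2 cb in auto)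
    from fun_cong[OF this, of 1] show "Dk x (1, 0) = (fs x powr B * gs x powr (A - 1) * W x y h) *\<^sub>R u \<theta>g x
                        - (fs x powr B * gs x powr A) *\<^sub>R u \<theta>g x" by simp
  qed
  define Jm where "Jm x = A *\<^sub>R (fs x powr (1 + \<alpha>) *\<^sub>R outer (u \<theta>g x) (u \<theta>g x))
        + ((gs x powr A - fs x powr A) * fs x powr B) *\<^sub>R (sinfo u \<theta>g x - B *\<^sub>R outer (u \<theta>g x) (u \<theta>g x))" for x
  have Dth: "\<And>x w. Dk x (0, w) = - (1 / A) *\<^sub>R (Jm x *v w)"
  proof -
    fix x
    have p1: "((\<lambda>t. (0::real, t)) has_derivative (\<lambda>w. (0, w))) (at \<theta>g within \<Theta>)"
      by (intro derivative_eq_intros) auto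
    have sub: "(\<lambda>t. (0::real, t)) ` \<Theta> \<subseteq> {0..1} \<times> \<Theta>" by auto
    have c1: "((\<lambda>t. est_integrand \<alpha> lam W h f u (contam G y 0) t x) has_derivative (\<lambda>w. Dk x (0, w)))
        (at \<theta>g)"
      using has_derivative_in_compose[OF p1 has_derivative_subset[OF Dk[of x] sub]]
        at_within_open[OF thg_in Theta_open] by simp
    have dF: "((\<lambda>t. fstar W h f t x) has_derivative (\<lambda>w. fstar W h f \<theta>g x * (w \<bullet> u \<theta>g x))) (at \<theta>g)"
      using fderiv_from_ln[of "\<lambda>t. fstar W h f t x" "\<lambda>w. w \<bullet> u \<theta>g x" \<theta>g \<Theta>] score thg_in Theta_open fstar_pos
      unfolding gderiv_def by auto
    have dU: "((\<lambda>t. u t x) has_derivative (\<lambda>w. - (sinfo u \<theta>g x *v w))) (at \<theta>g)"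
    proof -
      have "((\<lambda>t. u t x) has_derivative (\<lambda>w. jacobian (\<lambda>t. u t x) (at \<theta>g) *v w)) (at \<theta>g)"
        using score_diff thg_in jacobian_works by blast
      moreover have "\<And>w. - (sinfo u \<theta>g x *v w) = jacobian (\<lambda>t. u t x) (at \<theta>g) *v w"
        by (simp add: sinfo_def matrix_vector_mult_def vec_eq_iff sum_negf)
      ultimately show ?thesis by simp
    qed
    have c2: "((\<lambda>t. est_integrand \<alpha> lam W h f u (contam G y 0) t x) has_derivative (\<lambda>w. - (1 / A) *\<^sub>R (Jm x *v w)))
        (at \<theta>g)"
    proof -
      have eq: "(\<lambda>t. est_integrand \<alpha> lam W h f u (contam G y 0) t x)
          = (\<lambda>t. (((gs x / fstar W h f t x) powr A - 1) / A * fstar W h f t x powr (1 + \<alpha>)) *\<^sub>R u t x)"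
        by (simp add: fun_eq_iff est_integrand_def contam0 KA gs_def)
      show ?thesis
        unfolding eq using theta_deriv[OF dF _ gs_pos Ane Bal dU] fs_pos
        by (simp add: Jm_def fs_def)
    qed
    fix w
    show "Dk x (0, w) = - (1 / A) *\<^sub>R (Jm x *v w)"
      using has_derivative_unique[OF c1 c2] by metis
  qed
  define IF where "IF = influence_function T G y"
  have Tvd: "((\<lambda>e. T (contam G y e)) has_derivative (\<lambda>t. t *\<^sub>R IF)) (at 0 within {0..1})"
    using T_diff vector_derivative_works unfolding IF_def influence_function_def has_vector_derivative_def
    by blast
  have H: "((\<lambda>e. (e, T (contam G y e))) has_derivative (\<lambda>t. (t, t *\<^sub>R IF))) (at 0 within {0..1})"
    by (rule has_derivative_Pair[OF has_derivative_ident Tvd])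
  have subH: "(\<lambda>e. (e, T (contam G y e))) ` {0..1} \<subseteq> {0..1} \<times> \<Theta>" using T_est by auto
  have DF': "((\<lambda>(\<epsilon>, \<theta>). est_fun \<alpha> lam W h f u (contam G y \<epsilon>) \<theta>)
      has_derivative (\<lambda>v. LINT x|lborel. Dk x v)) (at (0, T (contam G y 0)) within {0..1} \<times> \<Theta>)"
    using DF T0 by simp
  have comp: "((\<lambda>e. est_fun \<alpha> lam W h f u (contam G y e) (T (contam G y e))) has_derivative
        (\<lambda>t. LINT x|lborel. Dk x (t, t *\<^sub>R IF))) (at 0 within {0..1})"
    using has_derivative_in_compose[OF H has_derivative_subset[OF DF' subH]] by simp
  have zero: "((\<lambda>e. est_fun \<alpha> lam W h f u (contam G y e) (T (contam G y e))) has_derivative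
        (\<lambda>t. 0)) (at 0 within {0..1})"
    by (rule has_derivative_transform_within[OF has_derivative_const[of 0] zero_less_one]) (use T_est in auto)
  have "(\<lambda>t. LINT x|lborel. Dk x (t, t *\<^sub>R IF)) = (\<lambda>t. 0)"
    by (rule frechet_derivative_unique_within_closed_interval[of 0 1 0]) (use comp zero cb in auto)
  from fun_cong[OF this, of 1] have L0: "(LINT x|lborel. Dk x (1, IF)) = 0" by simp
  have lin: "\<And>x. linear (Dk x)" using Dk has_derivative_linear by blast
  define n1 where "n1 x = (fs x powr B * gs x powr (A - 1) * W x y h) *\<^sub>R u \<theta>g x" for x
  define n2 where "n2 x = (fs x powr B * gs x powr A) *\<^sub>R u \<theta>g x" for x
  have split: "\<And>x. Dk x (1, IF) = (n1 x - n2 x) + (- (1 / A)) *\<^sub>R (Jm x *v IF)"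
  proof -
    fix x
    have "Dk x (1, IF) = Dk x ((1, 0) + (0, IF))" by simp
    also have "\<dots> = Dk x (1, 0) + Dk x (0, IF)" by (rule linear_add[OF lin])
    finally show "Dk x (1, IF) = (n1 x - n2 x) + (- (1 / A)) *\<^sub>R (Jm x *v IF)"
      by (simp add: Deps Dth n1_def n2_def)
  qed
  have bl: "bounded_linear (\<lambda>M::real^'p^'p. M *v IF)"
    unfolding linear_conv_bounded_linear[symmetric]
    by (rule linearI) (simp_all add: matrix_vector_mult_add_rdistrib scaleR_matrix_vector_assoc)
  have i3': "integrable lborel (\<lambda>x. A *\<^sub>R (fs x powr (1 + \<alpha>) *\<^sub>R outer (u \<theta>g x) (u \<theta>g x)))"
    by (rule integrable_scaleR_right) (rule int3)
  have iJm: "integrable lborel Jm" unfolding Jm_def by (rule Bochner_Integration.integrable_add[OF i3' int4])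
  have intJm: "(LINT x|lborel. Jm x) = J" unfolding Jm_def J_def
    by (subst Bochner_Integration.integral_add[OF i3' int4]) (simp only: integral_scaleR_right)
  have intJv: "(LINT x|lborel. Jm x *v IF) = J *v IF"
    using integral_bounded_linear[OF bl iJm] intJm by simp
  have iJv: "integrable lborel (\<lambda>x. Jm x *v IF)" using integrable_bounded_linear[OF bl iJm] .
  have i1: "integrable lborel n1" using int1 unfolding n1_def by simp
  have i2: "integrable lborel n2" using int2 unfolding n2_def by simp
  have "(LINT x|lborel. Dk x (1, IF)) = ((LINT x|lborel. n1 x) - (LINT x|lborel. n2 x)) + (- (1 / A)) *\<^sub>R (J *v IF)"
    unfolding split using i1 i2 iJv intJv by simp
  with L0 have "J *v IF = A *\<^sub>R ((LINT x|lborel. n1 x) - (LINT x|lborel. n2 x))"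
    using Ane by (simp add: algebra_simps)
  also have "\<dots> = N" unfolding N_def n1_def n2_def by simp
  finally have JN: "J *v IF = N" .
  have "matrix_inv J *v N = (matrix_inv J ** J) *v IF"
    unfolding JN[symmetric] by (simp add: matrix_vector_mul_assoc)
  also have "\<dots> = IF" using matrix_inv_left'[OF J_inv] by simp
  finally show ?thesis unfolding IF_def by simp
qed

end
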